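(* Let $(J,{\sf hn})$ be a hyperbolic Banach space where $J$ is a cone with joins, and let $\tau$ be the chronological topology induced by ${\sf hn}$. Then the intersection of any countable family of $\tau$-open and $\tau$-dense subsets of $J$ is $\tau$-dense.
   Context: A prewedge is a set $W$ with a commutative associative addition with neutral element $0$ and a multiplication $[0,\infty)\times W\to W$ such that $\lambda(\eta v)=(\lambda\eta)v$, $0v=0$, $1v=v$, $(\lambda+\eta)v=\lambda v+\eta v$, $\lambda(v+w)=\lambda v+\lambda w$; it carries the preorder $v\le w$ iff $v+z=w$ for some $z$. A wedge is a prewedge in which $\le$ is antisymmetric and $v=\sup_{\eta<1}\eta v$ for every $v$. A cone is a wedge in which every directed subset (one in which every finite subset, including the empty one, has an upper bound in it) has a supremum. A cone with joins is a cone $J$ in which every subset $A$ has an infimum and $\inf(v+A)=v+\inf A$ for all $v\in J$, $A\subset J$. A hyperbolic norm on $J$ is a map ${\sf hn}:J\to[0,\infty]$ with ${\sf hn}(0)=0$ and ${\sf hn}(\lambda_1v_1+\lambda_2v_2)\ge\lambda_1{\sf hn}(v_1)+\lambda_2{\sf hn}(v_2)$ for all $\lambda_i\ge0$; a hyperbolic Banach space is a cone with a hyperbolic norm. Write $v\ll w$ if there is $z$ with ${\sf hn}(z)>0$ and $v+z=w$. The chronological topology is the topology generated by the sets $I^+(v):=\{w:v\ll w\}$ and $I^-(v):=\{w:w\ll v\}$, $v\in J$. *)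

theory Defs
  imports "HOL-Analysis.Analysis" "HOL-Library.Extended_Nonnegative_Real"
begin

text \<open>A (pre)wedge structure on the whole type 'a, given by an addition, a neutral
element and a multiplication by nonnegative reals (values of smul at negative
scalars are irrelevant).\<close>

definition prewedge :: "('a \<Rightarrow> 'a \<Rightarrow> 'a) \<Rightarrow> 'a \<Rightarrow> (real \<Rightarrow> 'a \<Rightarrow> 'a) \<Rightarrow> bool" where
  "prewedge add z smul \<longleftrightarrow>
     (\<forall>u v w. add (add u v) w = add u (add v w)) \<and>
     (\<forall>v w. add v w = add w v) \<and>
     (\<forall>v. add z v = v) \<and>
     (\<forall>l e v. l \<ge> 0 \<longrightarrow> e \<ge> 0 \<longrightarrow> smul l (smul e v) = smul (l * e) v) \<and>
     (\<forall>v. smul 0 v = z) \<and>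
     (\<forall>v. smul 1 v = v) \<and>
     (\<forall>l e v. l \<ge> 0 \<longrightarrow> e \<ge> 0 \<longrightarrow> smul (l + e) v = add (smul l v) (smul e v)) \<and>
     (\<forall>l v w. l \<ge> 0 \<longrightarrow> smul l (add v w) = add (smul l v) (smul l w))"

definition wle :: "('a \<Rightarrow> 'a \<Rightarrow> 'a) \<Rightarrow> 'a \<Rightarrow> 'a \<Rightarrow> bool" where
  "wle add v w \<longleftrightarrow> (\<exists>z. add v z = w)"

definition is_sup_w :: "('a \<Rightarrow> 'a \<Rightarrow> 'a) \<Rightarrow> 'a set \<Rightarrow> 'a \<Rightarrow> bool" where
  "is_sup_w add A s \<longleftrightarrow> (\<forall>a\<in>A. wle add a s) \<and> (\<forall>u. (\<forall>a\<in>A. wle add a u) \<longrightarrow> wle add s u)"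

definition is_inf_w :: "('a \<Rightarrow> 'a \<Rightarrow> 'a) \<Rightarrow> 'a set \<Rightarrow> 'a \<Rightarrow> bool" where
  "is_inf_w add A i \<longleftrightarrow> (\<forall>a\<in>A. wle add i a) \<and> (\<forall>u. (\<forall>a\<in>A. wle add u a) \<longrightarrow> wle add u i)"

definition wedge :: "('a \<Rightarrow> 'a \<Rightarrow> 'a) \<Rightarrow> 'a \<Rightarrow> (real \<Rightarrow> 'a \<Rightarrow> 'a) \<Rightarrow> bool" where
  "wedge add z smul \<longleftrightarrow> prewedge add z smul \<and>
     (\<forall>v w. wle add v w \<longrightarrow> wle add w v \<longrightarrow> v = w) \<and>
     (\<forall>v. is_sup_w add {smul e v | e. 0 \<le> e \<and> e < 1} v)"

definition directed_w :: "('a \<Rightarrow> 'a \<Rightarrow> 'a) \<Rightarrow> 'a set \<Rightarrow> bool" where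
  "directed_w add A \<longleftrightarrow> (\<forall>F. finite F \<longrightarrow> F \<subseteq> A \<longrightarrow> (\<exists>u\<in>A. \<forall>x\<in>F. wle add x u))"

definition cone :: "('a \<Rightarrow> 'a \<Rightarrow> 'a) \<Rightarrow> 'a \<Rightarrow> (real \<Rightarrow> 'a \<Rightarrow> 'a) \<Rightarrow> bool" where
  "cone add z smul \<longleftrightarrow> wedge add z smul \<and>
     (\<forall>A. directed_w add A \<longrightarrow> (\<exists>s. is_sup_w add A s))"

definition cone_with_joins :: "('a \<Rightarrow> 'a \<Rightarrow> 'a) \<Rightarrow> 'a \<Rightarrow> (real \<Rightarrow> 'a \<Rightarrow> 'a) \<Rightarrow> bool" where
  "cone_with_joins add z smul \<longleftrightarrow> cone add z smul \<and>
     (\<forall>A. \<exists>i. is_inf_w add A i \<and> (\<forall>v. is_inf_w add (add v ` A) (add v i)))"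

definition hyperbolic_norm ::
  "('a \<Rightarrow> 'a \<Rightarrow> 'a) \<Rightarrow> 'a \<Rightarrow> (real \<Rightarrow> 'a \<Rightarrow> 'a) \<Rightarrow> ('a \<Rightarrow> ennreal) \<Rightarrow> bool" where
  "hyperbolic_norm add z smul hn \<longleftrightarrow> hn z = 0 \<and>
     (\<forall>l1 l2 v1 v2. l1 \<ge> 0 \<longrightarrow> l2 \<ge> 0 \<longrightarrow>
        hn (add (smul l1 v1) (smul l2 v2)) \<ge> ennreal l1 * hn v1 + ennreal l2 * hn v2)"

definition chron_less :: "('a \<Rightarrow> 'a \<Rightarrow> 'a) \<Rightarrow> ('a \<Rightarrow> ennreal) \<Rightarrow> 'a \<Rightarrow> 'a \<Rightarrow> bool" where
  "chron_less add hn v w \<longleftrightarrow> (\<exists>z. hn z > 0 \<and> add v z = w)"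

text \<open>Chronological topology on the whole carrier: generated by the sets I^+(v), I^-(v)
  (the whole space is included explicitly, as the empty finite intersection of subbasic sets).\<close>
definition chron_topology :: "('a \<Rightarrow> 'a \<Rightarrow> 'a) \<Rightarrow> ('a \<Rightarrow> ennreal) \<Rightarrow> 'a topology" where
  "chron_topology add hn = topology_generated_by
     (insert UNIV ({{w. chron_less add hn v w} | v. True} \<union> {{w. chron_less add hn w v} | v. True}))"

end

theory Submission
  imports Defs
begin

definition OpB :: "('a \<Rightarrow> 'a \<Rightarrow> 'a) \<Rightarrow> ('a \<Rightarrow> ennreal) \<Rightarrow> 'a set \<Rightarrow> 'a set \<Rightarrow> 'a set" where
  "OpB add hn L C = {w. (\<forall>l\<in>L. chron_less add hn l w) \<and> (\<forall>c\<in>C. chron_less add hn w c)}"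

definition DcB :: "('a \<Rightarrow> 'a \<Rightarrow> 'a) \<Rightarrow> 'a set \<Rightarrow> 'a set \<Rightarrow> 'a set" where
  "DcB add L C = {w. (\<forall>l\<in>L. wle add l w) \<and> (\<forall>c\<in>C. wle add w c)}"


lemma pw_assoc: "prewedge add z smul \<Longrightarrow> add (add u v) w = add u (add v w)"
  unfolding prewedge_def by blast
lemma pw_comm: "prewedge add z smul \<Longrightarrow> add v w = add w v"
  unfolding prewedge_def by blast
lemma pw_zero: "prewedge add z smul \<Longrightarrow> add z v = v"
  unfolding prewedge_def by blast
lemma pw_smul0: "prewedge add z smul \<Longrightarrow> smul 0 v = z"
  unfolding prewedge_def by blast
lemma pw_smul1: "prewedge add z smul \<Longrightarrow> smul 1 v = v"
  unfolding prewedge_def by blast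
lemma pw_distr: "prewedge add z smul \<Longrightarrow> l \<ge> 0 \<Longrightarrow> e \<ge> 0 \<Longrightarrow> smul (l + e) v = add (smul l v) (smul e v)"
  unfolding prewedge_def by blast
lemma hn_super: "hyperbolic_norm add z smul hn \<Longrightarrow> l1 \<ge> 0 \<Longrightarrow> l2 \<ge> 0 \<Longrightarrow>
        hn (add (smul l1 v1) (smul l2 v2)) \<ge> ennreal l1 * hn v1 + ennreal l2 * hn v2"
  unfolding hyperbolic_norm_def by blast

lemma hn_add2:
  assumes "prewedge add z smul" "hyperbolic_norm add z smul hn"
  shows "hn b \<le> hn (add a b)"
proof -
  have "ennreal 1 * hn a + ennreal 1 * hn b \<le> hn (add (smul 1 a) (smul 1 b))"
    using hn_super[OF assms(2), of 1 1 a b] by simp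
  then have "hn a + hn b \<le> hn (add a b)" using pw_smul1[OF assms(1)] by simp
  moreover have "hn b \<le> hn a + hn b" by simp
  ultimately show ?thesis by order
qed

lemma wle_trans:
  assumes "prewedge add z smul" "wle add a b" "wle add b c" shows "wle add a c"
  using assms(2,3) pw_assoc[OF assms(1)] unfolding wle_def by metis

lemma halving:
  assumes "prewedge add z smul" "hyperbolic_norm add z smul hn" "chron_less add hn a b"
  shows "\<exists>m. chron_less add hn a m \<and> chron_less add hn m b"
proof -
  obtain y where y: "hn y > 0" "add a y = b" using assms(3) unfolding chron_less_def by blast
  define h where "h = smul (1/2) y"
  have "ennreal (1/2) * hn y + ennreal 0 * hn y \<le> hn (add (smul (1/2) y) (smul 0 y))"
    using hn_super[OF assms(2), of "1/2" 0] by simp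
  moreover have "add (smul (1/2) y) (smul 0 y) = h"
    using pw_smul0[OF assms(1)] pw_zero[OF assms(1)] pw_comm[OF assms(1)] unfolding h_def by metis
  ultimately have "ennreal (1/2) * hn y \<le> hn h" by simp
  moreover have "ennreal (1/2) * hn y > 0" proof -
    have "(0::real) < 1/2" by simp
    then have "0 < ennreal (1/2)" by (simp only: ennreal_less_zero_iff)
    then show ?thesis using y(1) by (simp only: ennreal_zero_less_mult_iff)
  qed
  ultimately have hh: "hn h > 0" by order
  have "add h h = smul (1/2 + 1/2) y" using pw_distr[OF assms(1), of "1/2" "1/2"] unfolding h_def by simp
  then have "add h h = y" using pw_smul1[OF assms(1)] by simp
  then have "add (add a h) h = b" using y pw_assoc[OF assms(1)] by metis
  then show ?thesis using hh unfolding chron_less_def by blast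
qed

lemma cwj_prewedge: "cone_with_joins add z smul \<Longrightarrow> prewedge add z smul"
  unfolding cone_with_joins_def cone_def wedge_def by blast

lemma cwj_inf: "cone_with_joins add z smul \<Longrightarrow> \<exists>i. is_inf_w add A i"
proof -
  assume h: "cone_with_joins add z smul"
  have "cone add z smul \<and> (\<forall>A. \<exists>i. is_inf_w add A i \<and> (\<forall>v. is_inf_w add (add v ` A) (add v i)))"
    using h unfolding cone_with_joins_def .
  then show ?thesis by blast
qed

lemma cl_le: "chron_less add hn a b \<Longrightarrow> wle add a b"
  unfolding chron_less_def wle_def by blast

lemma le_cl:
  assumes "prewedge add z smul" "hyperbolic_norm add z smul hn" "wle add a b" "chron_less add hn b c"
  shows "chron_less add hn a c"
proof -
  obtain p where p: "add a p = b" using assms(3) unfolding wle_def by blast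
  obtain q where q: "hn q > 0" "add b q = c" using assms(4) unfolding chron_less_def by blast
  have "add a (add p q) = c" using p q pw_assoc[OF assms(1)] by metis
  moreover have "hn (add p q) > 0" using hn_add2[OF assms(1,2), of q p] q by simp
  ultimately show ?thesis unfolding chron_less_def by blast
qed

lemma cl_le2:
  assumes "prewedge add z smul" "hyperbolic_norm add z smul hn" "chron_less add hn a b" "wle add b c"
  shows "chron_less add hn a c"
proof -
  obtain p where p: "add b p = c" using assms(4) unfolding wle_def by blast
  obtain q where q: "hn q > 0" "add a q = b" using assms(3) unfolding chron_less_def by blast
  have "add a (add q p) = c" using p q pw_assoc[OF assms(1)] by metis
  moreover have "hn (add p q) > 0" using hn_add2[OF assms(1,2), of q p] q by simp
  then have "hn (add q p) > 0" using pw_comm[OF assms(1), of q p] by simp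
  ultimately show ?thesis unfolding chron_less_def by blast
qed

lemma OO_DD: "OpB add hn L C \<subseteq> DcB add L C"
proof
  fix w assume "w \<in> OpB add hn L C"
  then show "w \<in> DcB add L C" unfolding OpB_def DcB_def using cl_le by fast
qed

lemma OO_union: "OpB add hn (L1 \<union> L2) (C1 \<union> C2) = OpB add hn L1 C1 \<inter> OpB add hn L2 C2"
  unfolding OpB_def by (simp only: ball_Un Int_def mem_Collect_eq conj_ac)

definition gens where
  "gens add hn = insert UNIV ({{w. chron_less add hn v w} | v. True} \<union> {{w. chron_less add hn w v} | v. True})"

lemma openin_T: "openin (chron_topology add hn) U \<longleftrightarrow> generate_topology_on (gens add hn) U"
  unfolding chron_topology_def gens_def by (rule openin_topology_generated_by_iff)

lemma topspace_T: "topspace (chron_topology add hn) = UNIV"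
  unfolding chron_topology_def topology_generated_by_topspace by (simp only: Union_insert Un_UNIV_left)

lemma OO_open:
  assumes "finite L" "finite C" shows "openin (chron_topology add hn) (OpB add hn L C)"
  using assms(1)
proof (induction L rule: finite_induct)
  case empty
  show ?case using assms(2)
  proof (induction C rule: finite_induct)
    case empty
    have "OpB add hn {} {} = topspace (chron_topology add hn)" unfolding OpB_def topspace_T by simp
    then show ?case by simp
  next
    case (insert c C)
    have "OpB add hn {} (insert c C) = {w. chron_less add hn w c} \<inter> OpB add hn {} C"
      unfolding OpB_def by blast
    moreover have "openin (chron_topology add hn) {w. chron_less add hn w c}"
      unfolding openin_T by (rule generate_topology_on.Basis) (unfold gens_def, blast)
    ultimately show ?case using insert.IH openin_Int by metis
  qed
next
  case (insert l L)
  have "OpB add hn (insert l L) C = {w. chron_less add hn l w} \<inter> OpB add hn L C"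
    unfolding OpB_def by blast
  moreover have "openin (chron_topology add hn) {w. chron_less add hn l w}"
    unfolding openin_T by (rule generate_topology_on.Basis) (unfold gens_def, blast)
  ultimately show ?case using insert.IH openin_Int by metis
qed

lemma basic_nbhd:
  assumes "generate_topology_on (gens add hn) U" "x \<in> U"
  shows "\<exists>L C. finite L \<and> finite C \<and> x \<in> OpB add hn L C \<and> OpB add hn L C \<subseteq> U"
  using assms
proof (induction arbitrary: x rule: generate_topology_on.induct)
  case Empty
  then show ?case by simp
next
  case (Int a b)
  from Int.prems have xa: "x \<in> a" and xb: "x \<in> b" by simp_all
  obtain L1 C1 where 1: "finite L1" "finite C1" "x \<in> OpB add hn L1 C1" "OpB add hn L1 C1 \<subseteq> a"
    using Int.IH(1)[OF xa] by iprover
  obtain L2 C2 where 2: "finite L2" "finite C2" "x \<in> OpB add hn L2 C2" "OpB add hn L2 C2 \<subseteq> b"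
    using Int.IH(2)[OF xb] by iprover
  have e: "OpB add hn (L1 \<union> L2) (C1 \<union> C2) = OpB add hn L1 C1 \<inter> OpB add hn L2 C2"
    by (rule OO_union)
  have f1: "finite (L1 \<union> L2)" "finite (C1 \<union> C2)" using 1 2 by simp_all
  have f2: "x \<in> OpB add hn (L1 \<union> L2) (C1 \<union> C2)" unfolding e using 1(3) 2(3) by (rule IntI)
  have f3: "OpB add hn (L1 \<union> L2) (C1 \<union> C2) \<subseteq> a \<inter> b" unfolding e using 1(4) 2(4) by (rule Int_mono)
  show ?case using f1 f2 f3 by iprover
next
  case (UN K)
  then obtain k where k: "k \<in> K" "x \<in> k" by (meson UnionE)
  obtain L C where c: "finite L" "finite C" "x \<in> OpB add hn L C" "OpB add hn L C \<subseteq> k"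
    using UN.IH[OF k] by iprover
  have "k \<subseteq> \<Union>K" using k(1) by (rule Union_upper)
  then have "OpB add hn L C \<subseteq> \<Union>K" using c(4) by (rule order_trans[rotated])
  then show ?case using c(1,2,3) by iprover
next
  case (Basis s)
  have "s = UNIV \<or> (\<exists>v. s = {w. chron_less add hn v w}) \<or> (\<exists>v. s = {w. chron_less add hn w v})"
    using Basis(1) unfolding gens_def by simp
  then show ?case
  proof (elim disjE exE)
    assume "s = UNIV"
    then have "finite {} \<and> finite {} \<and> x \<in> OpB add hn {} {} \<and> OpB add hn {} {} \<subseteq> s"
      by (simp add: OpB_def)
    then show ?thesis by iprover
  next
    fix v assume "s = {w. chron_less add hn v w}"
    then have "finite {v} \<and> finite {} \<and> x \<in> OpB add hn {v} {} \<and> OpB add hn {v} {} \<subseteq> s"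
      using Basis(2) by (simp add: OpB_def)
    then show ?thesis by iprover
  next
    fix v assume "s = {w. chron_less add hn w v}"
    then have "finite {} \<and> finite {v} \<and> x \<in> OpB add hn {} {v} \<and> OpB add hn {} {v} \<subseteq> s"
      using Basis(2) by (simp add: OpB_def)
    then show ?thesis by iprover
  qed
qed

lemma shrink:
  assumes "prewedge add z smul" "hyperbolic_norm add z smul hn"
    "finite L" "finite C" "x \<in> OpB add hn L C"
  shows "\<exists>L' C'. finite L' \<and> finite C' \<and> x \<in> OpB add hn L' C' \<and> DcB add L' C' \<subseteq> OpB add hn L C"
proof -
  have xL: "chron_less add hn l x" if "l \<in> L" for l using assms(5) that by (simp add: OpB_def)
  have xC: "chron_less add hn x c" if "c \<in> C" for c using assms(5) that by (simp add: OpB_def)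
  have "\<forall>l\<in>L. \<exists>m. chron_less add hn l m \<and> chron_less add hn m x"
    using halving[OF assms(1,2) xL] by blast
  then have "\<exists>g. \<forall>l\<in>L. chron_less add hn l (g l) \<and> chron_less add hn (g l) x" by (rule bchoice)
  then obtain g where g: "\<forall>l\<in>L. chron_less add hn l (g l) \<and> chron_less add hn (g l) x" by (elim exE)
  have "\<forall>c\<in>C. \<exists>m. chron_less add hn x m \<and> chron_less add hn m c"
    using halving[OF assms(1,2) xC] by blast
  then have "\<exists>k. \<forall>c\<in>C. chron_less add hn x (k c) \<and> chron_less add hn (k c) c" by (rule bchoice)
  then obtain k where k: "\<forall>c\<in>C. chron_less add hn x (k c) \<and> chron_less add hn (k c) c" by (elim exE)
  have "x \<in> OpB add hn (g ` L) (k ` C)" using g k by (simp add: OpB_def)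
  moreover have "DcB add (g ` L) (k ` C) \<subseteq> OpB add hn L C"
  proof
    fix w assume w: "w \<in> DcB add (g ` L) (k ` C)"
    have wl: "wle add (g l) w" if "l \<in> L" for l using w that by (simp add: DcB_def)
    have wc: "wle add w (k c)" if "c \<in> C" for c using w that by (simp add: DcB_def)
    have "chron_less add hn l w" if "l \<in> L" for l
    proof -
      have "chron_less add hn l (g l)" using g that by simp
      then show ?thesis using wl[OF that] by (rule cl_le2[OF assms(1,2)])
    qed
    moreover have "chron_less add hn w c" if "c \<in> C" for c
    proof -
      have "chron_less add hn (k c) c" using k that by simp
      with wc[OF that] show ?thesis by (rule le_cl[OF assms(1,2)])
    qed
    ultimately show "w \<in> OpB add hn L C" by (simp add: OpB_def)
  qed
  moreover have "finite (g ` L)" "finite (k ` C)" using assms(3,4) by simp_all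
  ultimately show ?thesis by iprover
qed

lemma step:
  assumes "prewedge add z smul" "hyperbolic_norm add z smul hn"
    "finite L" "finite C" "x \<in> OpB add hn L C"
    "openin (chron_topology add hn) U" "(chron_topology add hn) closure_of U = UNIV"
  shows "\<exists>x' L' C'. finite L' \<and> finite C' \<and> x' \<in> OpB add hn L' C' \<and> DcB add L' C' \<subseteq> OpB add hn L C \<inter> U"
proof -
  have op: "openin (chron_topology add hn) (OpB add hn L C)" by (rule OO_open[OF assms(3,4)])
  have "(chron_topology add hn) closure_of U = topspace (chron_topology add hn)"
    using assms(7) by (simp only: topspace_T)
  then have dn: "\<forall>T. openin (chron_topology add hn) T \<and> T \<noteq> {} \<longrightarrow> U \<inter> T \<noteq> {}"
    by (simp only: dense_intersects_open)
  have ne: "OpB add hn L C \<noteq> {}" using assms(5) by auto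
  have "U \<inter> OpB add hn L C \<noteq> {}"
    using dn op ne by iprover
  then obtain x' where x': "x' \<in> OpB add hn L C \<inter> U" by auto
  have "openin (chron_topology add hn) (OpB add hn L C \<inter> U)" using openin_Int[OF op assms(6)] .
  then have gt: "generate_topology_on (gens add hn) (OpB add hn L C \<inter> U)" by (simp only: openin_T)
  then obtain L1 C1 where 1: "finite L1" "finite C1" "x' \<in> OpB add hn L1 C1" "OpB add hn L1 C1 \<subseteq> OpB add hn L C \<inter> U"
    using basic_nbhd[OF gt x'] by iprover
  obtain L' C' where 2: "finite L'" "finite C'" "x' \<in> OpB add hn L' C'" "DcB add L' C' \<subseteq> OpB add hn L1 C1"
    using shrink[OF assms(1,2) 1(1,2,3)] by iprover
  have "DcB add L' C' \<subseteq> OpB add hn L C \<inter> U" using 2(4) 1(4) by (rule order_trans)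
  then show ?thesis using 2(1,2,3) by iprover
qed

theorem mainTheorem18:
  fixes add :: "'a \<Rightarrow> 'a \<Rightarrow> 'a" and z :: 'a and smul :: "real \<Rightarrow> 'a \<Rightarrow> 'a"
    and hn :: "'a \<Rightarrow> ennreal" and \<F> :: "'a set set"
  assumes "cone_with_joins add z smul"
    and "hyperbolic_norm add z smul hn"
    and "countable \<F>"
    and "\<And>U. U \<in> \<F> \<Longrightarrow> openin (chron_topology add hn) U"
    and "\<And>U. U \<in> \<F> \<Longrightarrow> (chron_topology add hn) closure_of U = UNIV"
  shows "(chron_topology add hn) closure_of (\<Inter>\<F>) = UNIV"
proof (cases "\<F> = {}")
  case True
  then have "\<Inter>\<F> = UNIV" by simp
  then show ?thesis by (simp only: closure_of_UNIV topspace_T)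
next
  case False
  have pw: "prewedge add z smul" using cwj_prewedge[OF assms(1)] .
  define f where "f = from_nat_into \<F>"
  have fF: "f n \<in> \<F>" for n unfolding f_def by (rule from_nat_into[OF False])
  have fsurj: "U \<in> \<F> \<Longrightarrow> \<exists>n. f n = U" for U
    unfolding f_def by (rule from_nat_into_surj[OF assms(3)])
  have main: "\<Inter>\<F> \<inter> G \<noteq> {}" if G: "openin (chron_topology add hn) G" "G \<noteq> {}" for G
  proof -
    obtain g where gG: "g \<in> G" using G(2) by auto
    have gt: "generate_topology_on (gens add hn) G" using G(1) by (simp only: openin_T)
    obtain L0 C0 where b0: "finite L0" "finite C0" "g \<in> OpB add hn L0 C0" "OpB add hn L0 C0 \<subseteq> G"
      using basic_nbhd[OF gt gG] by iprover
    define Q where "Q = (\<lambda>n (s::'a \<times> 'a set \<times> 'a set) (s'::'a \<times> 'a set \<times> 'a set).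
       finite (fst (snd s')) \<and> finite (snd (snd s')) \<and> fst s' \<in> OpB add hn (fst (snd s')) (snd (snd s'))
       \<and> DcB add (fst (snd s')) (snd (snd s')) \<subseteq> OpB add hn (fst (snd s)) (snd (snd s)) \<inter> f n)"
    define nxt where "nxt = (\<lambda>n s. SOME s'. Q n s s')"
    define st where "st = rec_nat (g, L0, C0) nxt"
    define X where "X n = fst (st n)" for n
    define L where "L n = fst (snd (st n))" for n
    define C where "C n = snd (snd (st n))" for n
    have st0: "st 0 = (g, L0, C0)" unfolding st_def by simp
    have stS: "st (Suc n) = nxt n (st n)" for n unfolding st_def by simp
    have L0e: "L 0 = L0" and C0e: "C 0 = C0" and X0e: "X 0 = g" unfolding L_def C_def X_def st0 by simp_all
    have ex: "\<exists>s'. Q n (st n) s'"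
      if h: "finite (L n)" "finite (C n)" "X n \<in> OpB add hn (L n) (C n)" for n
    proof -
      obtain x' L' C' where r: "finite L'" "finite C'" "x' \<in> OpB add hn L' C'"
          "DcB add L' C' \<subseteq> OpB add hn (L n) (C n) \<inter> f n"
        using step[OF pw assms(2) h assms(4)[OF fF[of n]] assms(5)[OF fF[of n]]] by iprover
      have "Q n (st n) (x', L', C')" unfolding Q_def
        using r unfolding L_def C_def by simp
      then show ?thesis by (rule exI)
    qed
    have QS: "Q n (st n) (st (Suc n))"
      if h: "finite (L n)" "finite (C n)" "X n \<in> OpB add hn (L n) (C n)" for n
    proof -
      have "Q n (st n) (SOME s'. Q n (st n) s')" using ex[OF h] by (rule someI_ex)
      then show ?thesis unfolding stS nxt_def by simp
    qed
    have inv: "finite (L n) \<and> finite (C n) \<and> X n \<in> OpB add hn (L n) (C n)" for n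
    proof (induction n)
      case 0
      show ?case using b0(1,2,3) unfolding L0e C0e X0e by simp
    next
      case (Suc n)
      have "Q n (st n) (st (Suc n))" using Suc by (intro QS) simp_all
      then show ?case unfolding Q_def X_def L_def C_def by simp
    qed
    have prp: "DcB add (L (Suc n)) (C (Suc n)) \<subseteq> OpB add hn (L n) (C n) \<inter> f n" for n
    proof -
      have "Q n (st n) (st (Suc n))" using inv[of n] by (intro QS) simp_all
      then show ?thesis unfolding Q_def X_def L_def C_def by simp
    qed
    have nest1: "OpB add hn (L (Suc n)) (C (Suc n)) \<subseteq> OpB add hn (L n) (C n)" for n
    proof -
      have "OpB add hn (L (Suc n)) (C (Suc n)) \<subseteq> DcB add (L (Suc n)) (C (Suc n))" by (rule OO_DD)
      also have "\<dots> \<subseteq> OpB add hn (L n) (C n) \<inter> f n" by (rule prp)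
      also have "\<dots> \<subseteq> OpB add hn (L n) (C n)" by (rule Int_lower1)
      finally show ?thesis .
    qed
    have nest: "n \<le> m \<Longrightarrow> OpB add hn (L m) (C m) \<subseteq> OpB add hn (L n) (C n)" for n m
    proof (induction m rule: dec_induct)
      case base then show ?case by (rule order_refl)
    next
      case (step m) show ?case using nest1[of m] step.IH by (rule order_trans)
    qed
    have lc: "wle add l c" if "l \<in> L n" "c \<in> C m" for l c n m
    proof -
      have "X (max n m) \<in> OpB add hn (L (max n m)) (C (max n m))" using inv[of "max n m"] by simp
      then have x1: "X (max n m) \<in> OpB add hn (L n) (C n)" and x2: "X (max n m) \<in> OpB add hn (L m) (C m)"
        using nest[of n "max n m"] nest[of m "max n m"] by auto
      have "chron_less add hn l (X (max n m))" using x1 that(1) by (simp add: OpB_def)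
      moreover have "chron_less add hn (X (max n m)) c" using x2 that(2) by (simp add: OpB_def)
      ultimately show ?thesis using wle_trans[OF pw cl_le cl_le] by iprover
    qed
    obtain s where s: "is_inf_w add (\<Union>n. C n) s"
      using cwj_inf[OF assms(1)] by iprover
    have sD: "s \<in> DcB add (L n) (C n)" for n
    proof -
      have s1: "\<forall>a\<in>(\<Union>n. C n). wle add s a" and s2: "\<forall>u. (\<forall>a\<in>(\<Union>n. C n). wle add u a) \<longrightarrow> wle add u s"
        using s unfolding is_inf_w_def by simp_all
      have "wle add s c" if "c \<in> C n" for c using s1 that by auto
      moreover have "wle add l s" if "l \<in> L n" for l
      proof -
        have "\<forall>c\<in>(\<Union>m. C m). wle add l c" using lc[OF that] by auto
        then show ?thesis using s2 by simp
      qed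
      ultimately show ?thesis by (simp add: DcB_def)
    qed
    have sf: "s \<in> f n" for n using sD[of "Suc n"] prp[of n] by auto
    have "s \<in> \<Inter>\<F>"
    proof
      fix U assume "U \<in> \<F>"
      then obtain n where "f n = U" using fsurj by iprover
      then show "s \<in> U" using sf[of n] by simp
    qed
    moreover have "s \<in> G"
    proof -
      have "s \<in> OpB add hn (L 0) (C 0)" using sD[of "Suc 0"] prp[of 0] by auto
      then show ?thesis using b0(4) unfolding L0e C0e by auto
    qed
    ultimately show ?thesis by auto
  qed
  have "(chron_topology add hn) closure_of (\<Inter>\<F>) = topspace (chron_topology add hn)"
    unfolding dense_intersects_open using main by auto
  then show ?thesis by (simp only: topspace_T)
qed

end
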